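(* For every sufficiently large $n$, there exists a 3-uniform hypergraph $T$ with $10n$ vertices and $120n$ hyperedges, together with a set $Z\subseteq V(T)$ of $2n$ vertices, such that for any set $Z'\subseteq Z$ of $n$ vertices, the hypergraph obtained from $T$ by deleting the vertices of $Z'$ has a perfect matching.
   Context: A perfect matching of a hypergraph is a set of pairwise disjoint hyperedges covering all its vertices; deleting a vertex deletes it together with all hyperedges containing it. *)

theory Defs
  imports Main
begin

definition uniform_hypergraph :: "nat \<Rightarrow> 'a set \<Rightarrow> 'a set set \<Rightarrow> bool" where
  "uniform_hypergraph k V E \<longleftrightarrow> finite V \<and> (\<forall>e\<in>E. e \<subseteq> V \<and> card e = k)"

definition del_vertices_V :: "'a set \<Rightarrow> 'a set \<Rightarrow> 'a set" where
  "del_vertices_V V Z = V - Z"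

definition del_vertices_E :: "'a set set \<Rightarrow> 'a set \<Rightarrow> 'a set set" where
  "del_vertices_E E Z = {e \<in> E. e \<inter> Z = {}}"

definition perfect_matching :: "'a set \<Rightarrow> 'a set set \<Rightarrow> 'a set set \<Rightarrow> bool" where
  "perfect_matching V E M \<longleftrightarrow> M \<subseteq> E \<and>
     (\<forall>e1\<in>M. \<forall>e2\<in>M. e1 \<noteq> e2 \<longrightarrow> e1 \<inter> e2 = {}) \<and> \<Union>M = V"

definition has_perfect_matching :: "'a set \<Rightarrow> 'a set set \<Rightarrow> bool" where
  "has_perfect_matching V E \<longleftrightarrow> (\<exists>M. perfect_matching V E M)"

end

theory Submission
  imports Defs Complex_Main
begin

definition rk :: "nat set \<Rightarrow> nat \<Rightarrow> nat" where "rk R u = card {w\<in>R. w<u}"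

lemma rk_less: assumes "finite R" "u \<in> R" "u < w" shows "rk R u < rk R w"
  unfolding rk_def by (rule psubset_card_mono) (use assms in auto)

lemma rk_add: assumes "finite R" "u < w"
  shows "rk R w = rk R u + card {x\<in>R. u \<le> x \<and> x < w}"
proof -
  have "{w'\<in>R. w'<w} = {w'\<in>R. w'<u} \<union> {x\<in>R. u\<le>x\<and>x<w}" using assms by auto
  moreover have "{w'\<in>R. w'<u} \<inter> {x\<in>R. u\<le>x\<and>x<w} = {}" by auto
  ultimately show ?thesis unfolding rk_def using assms by (simp add: card_Un_disjoint)
qed

lemma mult5: fixes Z :: "nat set" assumes "Z \<subseteq> {x. 5 dvd x}" shows "card (Z \<inter> {u+1..u+3}) \<le> 1"
proof -
  have "\<forall>a\<in>Z \<inter> {u+1..u+3}. \<forall>b\<in>Z \<inter> {u+1..u+3}. a = b"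
  proof (intro ballI)
    fix a b assume "a \<in> Z \<inter> {u+1..u+3}" "b \<in> Z \<inter> {u+1..u+3}"
    then have "5 dvd a" "5 dvd b" "u+1 \<le> a" "a \<le> u+3" "u+1 \<le> b" "b \<le> u+3" using assms by auto
    then show "a = b" by presburger
  qed
  then show ?thesis using card_le_Suc0_iff_eq[of "Z \<inter> {u+1..u+3}"] by auto
qed

lemma gap: assumes "finite Z'" "Z' \<subseteq> {x. 5 dvd x}" "R = {..<N} - Z'" "u \<in> R" "w \<in> R" "u+4 \<le> w"
  shows "rk R u + 3 \<le> rk R w"
proof -
  have fR: "finite R" using assms by auto
  have s: "{u..<u+4} - (Z' \<inter> {u+1..u+3}) \<subseteq> {x\<in>R. u \<le> x \<and> x < w}"
  proof
    fix x assume x: "x \<in> {u..<u+4} - (Z' \<inter> {u+1..u+3})"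
    have "x \<notin> Z'"
    proof (cases "x = u")
      case True then show ?thesis using assms by auto
    next
      case False then show ?thesis using x by auto
    qed
    then show "x \<in> {x\<in>R. u \<le> x \<and> x < w}" using x assms by auto
  qed
  have "card {u..<u+4} - card (Z' \<inter> {u+1..u+3}) \<le> card ({u..<u+4} - (Z' \<inter> {u+1..u+3}))"
    by (rule diff_card_le_card_Diff) (use assms in auto)
  also have "\<dots> \<le> card {x\<in>R. u \<le> x \<and> x < w}" by (rule card_mono) (use fR s in auto)
  finally have "3 \<le> card {x\<in>R. u \<le> x \<and> x < w}" using mult5[OF assms(2), of u] by simp
  then show ?thesis using rk_add[OF fR, of u w] assms by simp
qed

lemma binom_bound: assumes "(n::nat) \<ge> 2" shows "120*n \<le> (10*n) choose 3"
proof -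
  have "(real (10*n) / real 3) ^ 3 \<le> real ((10*n) choose 3)"
    by (rule binomial_ge_n_over_k_pow_k) (use assms in auto)
  moreover have "real (120*n) \<le> (real (10*n) / real 3) ^ 3"
  proof -
    have "real n * real n \<ge> 4" using assms
      using mult_mono[of 2 "real n" 2 "real n"] by simp
    then have "real n * (real n * real n) \<ge> real n * 4" using assms by (intro mult_left_mono) auto
    then show ?thesis by (simp add: power3_eq_cube field_simps)
  qed
  ultimately show ?thesis by linarith
qed

theorem lemma5p2:
  shows "\<exists>n0::nat. \<forall>n\<ge>n0. \<exists>(V::nat set) (E::nat set set) Z.
     uniform_hypergraph 3 V E \<and> card V = 10 * n \<and> card E = 120 * n \<and>
     Z \<subseteq> V \<and> card Z = 2 * n \<and>
     (\<forall>Z'. Z' \<subseteq> Z \<and> card Z' = n \<longrightarrow>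
        has_perfect_matching (del_vertices_V V Z') (del_vertices_E E Z'))"
proof (rule exI[of _ 2], intro allI impI)
  fix n :: nat assume n2: "2 \<le> n"
  define N where "N = 10*n"
  define V where "V = {..<N}"
  define Z where "Z = (\<lambda>k. 5*k) ` {..<2*n}"
  define E0 where "E0 = {e. e \<subseteq> V \<and> card e = 3 \<and> (\<exists>i. e \<subseteq> {i..i+3})}"
  define T3 where "T3 = {e. e \<subseteq> V \<and> card e = 3}"
  have E0T: "E0 \<subseteq> T3" unfolding E0_def T3_def by auto
  have fT3: "finite T3" unfolding T3_def V_def by simp
  have cT3: "card T3 = N choose 3" unfolding T3_def V_def using n_subsets[of "{..<N}" 3] by simp
  have cE0: "card E0 \<le> 40*n"
  proof -
    have sub: "E0 \<subseteq> (\<Union>i<N. {e. e \<subseteq> {i..i+3} \<and> card e = 3})"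
    proof
      fix e assume "e \<in> E0"
      then obtain i where e: "e \<subseteq> V" "card e = 3" "e \<subseteq> {i..i+3}" unfolding E0_def by auto
      then have "e \<noteq> {}" by auto
      then obtain x where "x \<in> e" by auto
      then have "i \<le> x" "x < N" using e unfolding V_def by auto
      then have "i < N" by linarith
      then show "e \<in> (\<Union>i<N. {e. e \<subseteq> {i..i+3} \<and> card e = 3})" using e by auto
    qed
    have "card E0 \<le> card (\<Union>i<N. {e. e \<subseteq> {i..i+3} \<and> card e = 3})"
      by (rule card_mono[OF _ sub]) auto
    also have "\<dots> \<le> (\<Sum>i<N. card {e. e \<subseteq> {i..i+3} \<and> card e = 3})" by (rule card_UN_le) auto
    also have "\<dots> = (\<Sum>i<N. 4)"
    proof (rule sum.cong)
      fix i :: nat show "card {e. e \<subseteq> {i..i+3} \<and> card e = 3} = 4"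
        using n_subsets[of "{i..i+3}" 3] by (simp add: numeral_eq_Suc)
    qed simp
    finally show ?thesis unfolding N_def by simp
  qed
  have big: "120*n \<le> card T3" using cT3 binom_bound[OF n2] unfolding N_def by simp
  have cD: "card (T3 - E0) = card T3 - card E0" using E0T fT3 by (simp add: card_Diff_subset finite_subset)
  obtain F where F: "F \<subseteq> T3 - E0" "card F = 120*n - card E0"
  proof -
    have "120*n - card E0 \<le> card (T3 - E0)" using cD big by simp
    then show ?thesis using obtain_subset_with_card_n that by blast
  qed
  define E where "E = E0 \<union> F"
  have fE0: "finite E0" by (rule finite_subset[OF E0T fT3])
  have fF: "finite F" by (rule finite_subset[OF _ fT3]) (use F in auto)
  have cE: "card E = 120*n" unfolding E_def using F cE0 fE0 fF
    by (subst card_Un_disjoint) auto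
  have ET: "E \<subseteq> T3" unfolding E_def using E0T F by auto
  have ZV: "Z \<subseteq> V" unfolding Z_def V_def N_def by auto
  have cZ: "card Z = 2*n" unfolding Z_def by (subst card_image) (auto simp: inj_on_def)
  have Z5: "Z \<subseteq> {x. 5 dvd x}" unfolding Z_def by auto
  have match: "has_perfect_matching (del_vertices_V V Z') (del_vertices_E E Z')"
    if Z': "Z' \<subseteq> Z" "card Z' = n" for Z'
  proof -
    define R where "R = V - Z'"
    have fZ': "finite Z'" by (rule finite_subset[OF Z'(1)]) (simp add: Z_def)
    have fR: "finite R" unfolding R_def V_def by simp
    have cR: "card R = 9*n" unfolding R_def using Z' ZV fZ'
      by (subst card_Diff_subset) (auto simp: V_def N_def)
    have Z'5: "Z' \<subseteq> {x. 5 dvd x}" using Z' Z5 by auto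
    have RN: "R = {..<N} - Z'" unfolding R_def V_def ..
    have rklt: "rk R u < 9*n" if "u \<in> R" for u
    proof -
      have "rk R u < card R" unfolding rk_def by (rule psubset_card_mono) (use fR that in auto)
      then show ?thesis using cR by simp
    qed
    have inj: "inj_on (rk R) R"
    proof (rule inj_onI)
      fix u w assume "u \<in> R" "w \<in> R" "rk R u = rk R w"
      then show "u = w" using rk_less[OF fR] by (metis less_irrefl linorder_neqE_nat)
    qed
    have img: "rk R ` R = {..<9*n}"
    proof (rule card_subset_eq)
      show "rk R ` R \<subseteq> {..<9*n}" using rklt by auto
      show "card (rk R ` R) = card {..<9*n}" using card_image[OF inj] cR by simp
    qed simp
    define C where "C j = {u\<in>R. rk R u div 3 = j}" for j
    have CE0: "C j \<in> E0" if "j < 3*n" for j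
    proof -
      have CV: "C j \<subseteq> V" unfolding C_def R_def by auto
      have "rk R ` C j = {x. x < 9*n \<and> x div 3 = j}" unfolding C_def using img by auto
      also have "\<dots> = {3*j..<3*j+3}"
      proof (intro set_eqI iffI)
        fix x assume "x \<in> {x. x < 9*n \<and> x div 3 = j}" then show "x \<in> {3*j..<3*j+3}" by auto
      next
        fix x assume "x \<in> {3*j..<3*j+3}" then show "x \<in> {x. x < 9*n \<and> x div 3 = j}" using that by auto
      qed
      finally have im: "rk R ` C j = {3*j..<3*j+3}" .
      have "card (C j) = card (rk R ` C j)"
        by (rule card_image[symmetric]) (rule inj_on_subset[OF inj], auto simp: C_def)
      then have cC: "card (C j) = 3" using im by simp
      have "3*j \<in> rk R ` R" using img that by auto
      then obtain x where x: "x \<in> R" "rk R x = 3*j" by auto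
      have "C j \<subseteq> {x..x+3}"
      proof
        fix u assume u: "u \<in> C j"
        then have uR: "u \<in> R" and ud: "rk R u div 3 = j" unfolding C_def by auto
        have "\<not> u < x"
        proof
          assume "u < x" then have "rk R u < rk R x" using rk_less[OF fR uR] by simp
          then show False using x ud by auto
        qed
        moreover have "\<not> x + 4 \<le> u"
        proof
          assume "x + 4 \<le> u"
          then have "rk R x + 3 \<le> rk R u" using gap[OF fZ' Z'5 RN x(1) uR] by simp
          then show False using x ud by auto
        qed
        ultimately show "u \<in> {x..x+3}" by auto
      qed
      then show ?thesis unfolding E0_def using CV cC by blast
    qed
    define M where "M = C ` {..<3*n}"
    have "perfect_matching R (del_vertices_E E Z') M"
      unfolding perfect_matching_def
    proof (intro conjI)
      show "M \<subseteq> del_vertices_E E Z'"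
        unfolding M_def del_vertices_E_def E_def using CE0 by (auto simp: C_def R_def)
      show "\<forall>e1\<in>M. \<forall>e2\<in>M. e1 \<noteq> e2 \<longrightarrow> e1 \<inter> e2 = {}"
        unfolding M_def C_def by auto
      show "\<Union>M = R"
      proof
        show "\<Union>M \<subseteq> R" unfolding M_def C_def by auto
        show "R \<subseteq> \<Union>M"
        proof
          fix u assume u: "u \<in> R"
          then have "rk R u < 9*n" using rklt by auto
          then have "rk R u div 3 < 3*n" by linarith
          then show "u \<in> \<Union>M" unfolding M_def C_def using u by auto
        qed
      qed
    qed
    then show ?thesis unfolding has_perfect_matching_def del_vertices_V_def R_def by blast
  qed
  have unif: "uniform_hypergraph 3 V E" unfolding uniform_hypergraph_def using ET
      unfolding T3_def V_def by auto
  have cV: "card V = 10*n" unfolding V_def N_def by simp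
  show "\<exists>(V::nat set) (E::nat set set) Z.
     uniform_hypergraph 3 V E \<and> card V = 10 * n \<and> card E = 120 * n \<and>
     Z \<subseteq> V \<and> card Z = 2 * n \<and>
     (\<forall>Z'. Z' \<subseteq> Z \<and> card Z' = n \<longrightarrow>
        has_perfect_matching (del_vertices_V V Z') (del_vertices_E E Z'))"
    using unif cV cE ZV cZ match by blast
qed

end
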